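(* Let $R$ be a commutative ring with identity and $M$ a non-zero comultiplication $R$-module. Then the large sum graph $G'(M)$ is a null graph (has no vertices) if and only if $M$ is a cocyclic module.
   Context: An $R$-module $M$ is a comultiplication module if for every submodule $N$ of $M$ there is an ideal $I$ of $R$ with $N=\mathrm{Ann}_M(I)$. A submodule $N$ of $M$ is large in $M$ if $N\cap L\neq 0$ for every non-zero submodule $L$ of $M$. $\mathrm{Soc}(M)$ is the sum of all minimal submodules of $M$. $M$ is cocyclic if $\mathrm{Soc}(M)$ is a simple submodule of $M$ that is large in $M$. The large sum graph $G'(M)$ has as vertex set the set of all non-zero non-large submodules of $M$, and two distinct vertices $N,K$ are adjacent iff $N+K$ is a non-large submodule of $M$. *)

theory Defs
  imports "HOL-Algebra.Module" "HOL-Algebra.Ideal"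
begin

definition ann_M :: "('a, 'c) ring_scheme \<Rightarrow> ('a, 'b, 'd) module_scheme \<Rightarrow> 'a set \<Rightarrow> 'b set" where
  "ann_M R M I = {m \<in> carrier M. \<forall>r\<in>I. r \<odot>\<^bsub>M\<^esub> m = \<zero>\<^bsub>M\<^esub>}"

definition comultiplication_module :: "('a, 'c) ring_scheme \<Rightarrow> ('a, 'b, 'd) module_scheme \<Rightarrow> bool" where
  "comultiplication_module R M \<longleftrightarrow>
     (\<forall>N. submodule N R M \<longrightarrow> (\<exists>I. ideal I R \<and> N = ann_M R M I))"

definition msum :: "('a, 'b, 'd) module_scheme \<Rightarrow> 'b set \<Rightarrow> 'b set \<Rightarrow> 'b set" where
  "msum M N K = {x \<oplus>\<^bsub>M\<^esub> y | x y. x \<in> N \<and> y \<in> K}"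

definition large_submodule :: "('a, 'c) ring_scheme \<Rightarrow> ('a, 'b, 'd) module_scheme \<Rightarrow> 'b set \<Rightarrow> bool" where
  "large_submodule R M N \<longleftrightarrow> submodule N R M \<and>
     (\<forall>L. submodule L R M \<and> L \<noteq> {\<zero>\<^bsub>M\<^esub>} \<longrightarrow> N \<inter> L \<noteq> {\<zero>\<^bsub>M\<^esub>})"

definition minimal_submodule :: "('a, 'c) ring_scheme \<Rightarrow> ('a, 'b, 'd) module_scheme \<Rightarrow> 'b set \<Rightarrow> bool" where
  "minimal_submodule R M N \<longleftrightarrow> submodule N R M \<and> N \<noteq> {\<zero>\<^bsub>M\<^esub>} \<and>
     (\<forall>L. submodule L R M \<and> L \<subseteq> N \<longrightarrow> L = {\<zero>\<^bsub>M\<^esub>} \<or> L = N)"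

text \<open>Socle: the sum of all minimal submodules, i.e. the smallest submodule containing
  all of them (equal to the zero submodule if there are none).\<close>
definition socle :: "('a, 'c) ring_scheme \<Rightarrow> ('a, 'b, 'd) module_scheme \<Rightarrow> 'b set" where
  "socle R M = \<Inter>{L. submodule L R M \<and> \<Union>{N. minimal_submodule R M N} \<subseteq> L}"

definition cocyclic :: "('a, 'c) ring_scheme \<Rightarrow> ('a, 'b, 'd) module_scheme \<Rightarrow> bool" where
  "cocyclic R M \<longleftrightarrow> minimal_submodule R M (socle R M) \<and> large_submodule R M (socle R M)"

definition lsg_vertices :: "('a, 'c) ring_scheme \<Rightarrow> ('a, 'b, 'd) module_scheme \<Rightarrow> 'b set set" where
  "lsg_vertices R M = {N. submodule N R M \<and> N \<noteq> {\<zero>\<^bsub>M\<^esub>} \<and> \<not> large_submodule R M N}"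

definition lsg_adjacent :: "('a, 'c) ring_scheme \<Rightarrow> ('a, 'b, 'd) module_scheme \<Rightarrow> 'b set \<Rightarrow> 'b set \<Rightarrow> bool" where
  "lsg_adjacent R M N K \<longleftrightarrow> N \<in> lsg_vertices R M \<and> K \<in> lsg_vertices R M \<and> N \<noteq> K \<and>
     \<not> large_submodule R M (msum M N K)"

definition lsg_null :: "('a, 'c) ring_scheme \<Rightarrow> ('a, 'b, 'd) module_scheme \<Rightarrow> bool" where
  "lsg_null R M \<longleftrightarrow> lsg_vertices R M = {}"

end

theory Submission
  imports Defs
begin

context module
begin

lemma sm_zero: "submodule H R M \<Longrightarrow> \<zero>\<^bsub>M\<^esub> \<in> H"
  using subgroup.one_closed[OF submodule.axioms(1)] by fastforce

lemma sm_sub: "submodule H R M \<Longrightarrow> H \<subseteq> carrier M"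
  using submoduleE(1) by blast

lemma sm_int: "submodule H R M \<Longrightarrow> submodule K R M \<Longrightarrow> submodule (H \<inter> K) R M"
  apply (rule submoduleI)
  using submoduleE[of H] submoduleE[of K] sm_zero[of H] sm_zero[of K] by auto

lemma sm_nz: "submodule H R M \<Longrightarrow> H \<noteq> {\<zero>\<^bsub>M\<^esub>} \<Longrightarrow> \<exists>y\<in>H. y \<noteq> \<zero>\<^bsub>M\<^esub>"
  using sm_zero by blast

lemma ann_sm: "I \<subseteq> carrier R \<Longrightarrow> submodule (ann_M R M I) R M"
  unfolding ann_M_def
proof (rule submoduleI, goal_cases)
  case 3 then show ?case by (auto simp: smult_r_minus subsetD)
next
  case 4 then show ?case by (auto simp: smult_r_distr subsetD)
next
  case (5 a x)
  then show ?case using smult_assoc1 m_comm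
    by (auto simp: subsetD) (metis smult_assoc1 m_comm smult_r_null subsetD)
qed auto

lemma cyc_sm:
  assumes T: "T \<subseteq> carrier R" "\<zero> \<in> T" "\<And>a. a \<in> T \<Longrightarrow> \<ominus> a \<in> T"
    "\<And>a b. a \<in> T \<Longrightarrow> b \<in> T \<Longrightarrow> a \<oplus> b \<in> T"
    "\<And>a b. a \<in> carrier R \<Longrightarrow> b \<in> T \<Longrightarrow> a \<otimes> b \<in> T"
    and m: "m \<in> carrier M"
  shows "submodule {t \<odot>\<^bsub>M\<^esub> m | t. t \<in> T} R M"
proof (rule submoduleI, goal_cases)
  case 1 then show ?case using T m by auto
next
  case 2 then show ?case using T m by (metis (mono_tags, lifting) mem_Collect_eq smult_l_null)
next
  case (3 a) then show ?case using T m by (auto simp: smult_l_minus[symmetric] subsetD)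
next
  case (4 a b) then show ?case using T m by (auto simp: smult_l_distr[symmetric] subsetD)
next
  case (5 a x) then show ?case using T m by (auto simp: smult_assoc1[symmetric] subsetD)
qed

lemma cocyc_null:
  assumes "cocyclic R M"
  shows "lsg_null R M"
proof -
  let ?S = "socle R M"
  have min: "minimal_submodule R M ?S" and lg: "large_submodule R M ?S"
    using assms unfolding cocyclic_def by auto
  have Ssm: "submodule ?S R M" using min unfolding minimal_submodule_def by auto
  have "large_submodule R M N" if N: "submodule N R M" "N \<noteq> {\<zero>\<^bsub>M\<^esub>}" for N
  proof -
    have "?S \<inter> N \<noteq> {\<zero>\<^bsub>M\<^esub>}" using lg N unfolding large_submodule_def by auto
    moreover have "submodule (N \<inter> ?S) R M" using sm_int[OF N(1) Ssm] .
    ultimately have "N \<inter> ?S = ?S" using min unfolding minimal_submodule_def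
      by (metis Int_commute inf_le2)
    hence SN: "?S \<subseteq> N" by blast
    show ?thesis unfolding large_submodule_def
    proof (intro conjI allI impI)
      fix L assume L: "submodule L R M \<and> L \<noteq> {\<zero>\<^bsub>M\<^esub>}"
      have "?S \<inter> L \<noteq> {\<zero>\<^bsub>M\<^esub>}" using lg L unfolding large_submodule_def by auto
      moreover have "\<zero>\<^bsub>M\<^esub> \<in> ?S \<inter> L" using sm_zero Ssm L by blast
      ultimately obtain y where "y \<in> ?S \<inter> L" "y \<noteq> \<zero>\<^bsub>M\<^esub>" by blast
      thus "N \<inter> L \<noteq> {\<zero>\<^bsub>M\<^esub>}" using SN by blast
    qed (rule N(1))
  qed
  thus ?thesis unfolding lsg_null_def lsg_vertices_def by blast
qed

lemma null_cocyc:
  assumes nz: "carrier M \<noteq> {\<zero>\<^bsub>M\<^esub>}" and co: "comultiplication_module R M"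
    and nl: "lsg_null R M"
  shows "cocyclic R M"
proof -
  have lgall: "large_submodule R M N" if "submodule N R M" "N \<noteq> {\<zero>\<^bsub>M\<^esub>}" for N
    using nl that unfolding lsg_null_def lsg_vertices_def by blast
  have intnz: "N1 \<inter> N2 \<noteq> {\<zero>\<^bsub>M\<^esub>}" if "submodule N1 R M" "N1 \<noteq> {\<zero>\<^bsub>M\<^esub>}"
      "submodule N2 R M" "N2 \<noteq> {\<zero>\<^bsub>M\<^esub>}" for N1 N2
    using lgall[OF that(1,2)] that(3,4) unfolding large_submodule_def by blast
  have comu: "\<exists>I. ideal I R \<and> N = ann_M R M I" if "submodule N R M" for N
    using co that unfolding comultiplication_module_def by blast
  define J where "J = {r \<in> carrier R. \<exists>N. submodule N R M \<and> N \<noteq> {\<zero>\<^bsub>M\<^esub>} \<and>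
      (\<forall>x\<in>N. r \<odot>\<^bsub>M\<^esub> x = \<zero>\<^bsub>M\<^esub>)}"
  have Jsub: "J \<subseteq> carrier R" unfolding J_def by auto
  have J0: "\<zero> \<in> J" unfolding J_def using carrier_is_submodule nz sm_sub[OF carrier_is_submodule]
    by (auto intro!: exI[of _ "carrier M"])
  have Jneg: "\<ominus> a \<in> J" if hA: "a \<in> J" for a
  proof -
    obtain N1 where N1: "submodule N1 R M" "N1 \<noteq> {\<zero>\<^bsub>M\<^esub>}" "\<forall>x\<in>N1. a \<odot>\<^bsub>M\<^esub> x = \<zero>\<^bsub>M\<^esub>" "a \<in> carrier R"
      using hA unfolding J_def by blast
    have "\<forall>x\<in>N1. (\<ominus> a) \<odot>\<^bsub>M\<^esub> x = \<zero>\<^bsub>M\<^esub>"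
    proof
      fix x assume x: "x \<in> N1"
      hence xc: "x \<in> carrier M" using sm_sub[OF N1(1)] by blast
      have "(\<ominus> a) \<odot>\<^bsub>M\<^esub> x = \<ominus>\<^bsub>M\<^esub> (a \<odot>\<^bsub>M\<^esub> x)" using smult_l_minus[OF N1(4) xc] .
      also have "\<dots> = \<zero>\<^bsub>M\<^esub>" using N1(3) x by simp
      finally show "(\<ominus> a) \<odot>\<^bsub>M\<^esub> x = \<zero>\<^bsub>M\<^esub>" .
    qed
    thus ?thesis unfolding J_def using N1 by blast
  qed
  have Jadd: "a \<oplus> b \<in> J" if hA: "a \<in> J" "b \<in> J" for a b
  proof -
    obtain N1 where N1: "submodule N1 R M" "N1 \<noteq> {\<zero>\<^bsub>M\<^esub>}" "\<forall>x\<in>N1. a \<odot>\<^bsub>M\<^esub> x = \<zero>\<^bsub>M\<^esub>" "a \<in> carrier R"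
      using hA(1) unfolding J_def by blast
    obtain N2 where N2: "submodule N2 R M" "N2 \<noteq> {\<zero>\<^bsub>M\<^esub>}" "\<forall>x\<in>N2. b \<odot>\<^bsub>M\<^esub> x = \<zero>\<^bsub>M\<^esub>" "b \<in> carrier R"
      using hA(2) unfolding J_def by blast
    have "submodule (N1 \<inter> N2) R M" "N1 \<inter> N2 \<noteq> {\<zero>\<^bsub>M\<^esub>}" using sm_int N1 N2 intnz by auto
    moreover have "\<forall>x\<in>N1 \<inter> N2. (a \<oplus> b) \<odot>\<^bsub>M\<^esub> x = \<zero>\<^bsub>M\<^esub>"
      using N1 N2 sm_sub[OF N1(1)] by (auto simp: smult_l_distr)
    ultimately show ?thesis unfolding J_def using N1(4) N2(4) by blast
  qed
  have Jmul: "a \<otimes> b \<in> J" if hA: "a \<in> carrier R" "b \<in> J" for a b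
  proof -
    obtain N1 where N1: "submodule N1 R M" "N1 \<noteq> {\<zero>\<^bsub>M\<^esub>}" "\<forall>x\<in>N1. b \<odot>\<^bsub>M\<^esub> x = \<zero>\<^bsub>M\<^esub>" "b \<in> carrier R"
      using hA(2) unfolding J_def by blast
    have "\<forall>x\<in>N1. (a \<otimes> b) \<odot>\<^bsub>M\<^esub> x = \<zero>\<^bsub>M\<^esub>"
      using N1 sm_sub[OF N1(1)] hA(1) by (auto simp: smult_assoc1)
    thus ?thesis unfolding J_def using N1 hA(1) by blast
  qed
  define S where "S = ann_M R M J"
  have Ssm: "submodule S R M" unfolding S_def using ann_sm[OF Jsub] .
  have SN: "S \<subseteq> N" if N: "submodule N R M" "N \<noteq> {\<zero>\<^bsub>M\<^esub>}" for N
  proof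
    fix x assume x: "x \<in> S"
    obtain I where I: "ideal I R" "N = ann_M R M I" using comu N(1) by blast
    have Isub: "I \<subseteq> carrier R" using I(1) by (simp add: additive_subgroup.a_subset ideal.axioms(1))
    have "i \<in> J" if "i \<in> I" for i
      using that Isub N I(2) unfolding J_def ann_M_def by blast
    hence "x \<in> ann_M R M I" using x unfolding S_def ann_M_def by blast
    thus "x \<in> N" using I by simp
  qed
  have Snz: "S \<noteq> {\<zero>\<^bsub>M\<^esub>}"
  proof
    assume S0: "S = {\<zero>\<^bsub>M\<^esub>}"
    obtain m where m: "m \<in> carrier M" "m \<noteq> \<zero>\<^bsub>M\<^esub>"
      using nz sm_zero[OF carrier_is_submodule] by blast
    let ?K = "{t \<odot>\<^bsub>M\<^esub> m | t. t \<in> J}"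
    have Ksm: "submodule ?K R M" by (rule cyc_sm[OF Jsub J0 Jneg Jadd Jmul m(1)])
    obtain I where I: "ideal I R" "?K = ann_M R M I" using comu Ksm by blast
    have Isub: "I \<subseteq> carrier R" using I(1) by (simp add: additive_subgroup.a_subset ideal.axioms(1))
    have "i \<odot>\<^bsub>M\<^esub> m = \<zero>\<^bsub>M\<^esub>" if i: "i \<in> I" for i
    proof -
      have ic: "i \<in> carrier R" using i Isub by blast
      have "j \<odot>\<^bsub>M\<^esub> (i \<odot>\<^bsub>M\<^esub> m) = \<zero>\<^bsub>M\<^esub>" if j: "j \<in> J" for j
      proof -
        have jc: "j \<in> carrier R" using j Jsub by blast
        have "j \<odot>\<^bsub>M\<^esub> m \<in> ann_M R M I" using I(2) j by blast
        hence "i \<odot>\<^bsub>M\<^esub> (j \<odot>\<^bsub>M\<^esub> m) = \<zero>\<^bsub>M\<^esub>" using i unfolding ann_M_def by blast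
        thus ?thesis using ic jc m(1) by (metis smult_assoc1 m_comm)
      qed
      hence "i \<odot>\<^bsub>M\<^esub> m \<in> S" unfolding S_def ann_M_def using ic m(1) by blast
      thus ?thesis using S0 by blast
    qed
    hence "m \<in> ann_M R M I" unfolding ann_M_def using m(1) by blast
    then obtain j where j: "j \<in> J" "m = j \<odot>\<^bsub>M\<^esub> m" using I(2) by auto
    obtain N where N: "submodule N R M" "N \<noteq> {\<zero>\<^bsub>M\<^esub>}" "\<forall>x\<in>N. j \<odot>\<^bsub>M\<^esub> x = \<zero>\<^bsub>M\<^esub>" and jc: "j \<in> carrier R"
      using j(1) unfolding J_def by blast
    let ?Rm = "{t \<odot>\<^bsub>M\<^esub> m | t. t \<in> carrier R}"
    have Rmsm: "submodule ?Rm R M" by (rule cyc_sm) (auto simp: m(1))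
    have "m \<in> ?Rm" using m(1) by (metis (mono_tags, lifting) mem_Collect_eq one_closed smult_one)
    hence "?Rm \<noteq> {\<zero>\<^bsub>M\<^esub>}" using m(2) by blast
    hence "N \<inter> ?Rm \<noteq> {\<zero>\<^bsub>M\<^esub>}" using intnz N Rmsm by blast
    moreover have "\<zero>\<^bsub>M\<^esub> \<in> N \<inter> ?Rm" using sm_zero N(1) Rmsm by blast
    ultimately obtain y where y: "y \<in> N" "y \<in> ?Rm" "y \<noteq> \<zero>\<^bsub>M\<^esub>" by blast
    then obtain r where r: "r \<in> carrier R" "y = r \<odot>\<^bsub>M\<^esub> m" by blast
    have "j \<odot>\<^bsub>M\<^esub> y = r \<odot>\<^bsub>M\<^esub> (j \<odot>\<^bsub>M\<^esub> m)" using r jc m(1) by (metis smult_assoc1 m_comm)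
    also have "\<dots> = y" using j(2) r by simp
    finally show False using N(3) y by simp
  qed
  have minS: "minimal_submodule R M S"
    unfolding minimal_submodule_def using Ssm Snz SN by blast
  have "minimal_submodule R M N \<longleftrightarrow> N = S" for N
    using minS SN Ssm Snz unfolding minimal_submodule_def by blast
  hence "\<Union>{N. minimal_submodule R M N} = S" by blast
  hence soc: "socle R M = S" unfolding socle_def using Ssm by blast
  have "large_submodule R M S" unfolding large_submodule_def using Ssm SN Snz
    by (metis inf.absorb1)
  thus ?thesis unfolding cocyclic_def soc using minS by blast
qed

end

theorem proposition2p4:
  fixes R :: "('a, 'c) ring_scheme" and M :: "('a, 'b, 'd) module_scheme"
  assumes "module R M"
    and "carrier M \<noteq> {\<zero>\<^bsub>M\<^esub>}"
    and "comultiplication_module R M"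
  shows "lsg_null R M \<longleftrightarrow> cocyclic R M"
  using module.cocyc_null[OF assms(1)] module.null_cocyc[OF assms] by blast

end
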